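(* Let $\kappa=1$ and $F(R)=\bigl(h-\lambda R-\tfrac12R^2\bigr)^2-(R^2-\mu^2)(R-\ell)$. The set of parameters $(\lambda,\mu,\ell)\in\mathbb{R}^3$ for which there exist $h\in\mathbb{R}$ and $a>\max(|\mu|,\ell)$ such that $a$ is a root of $F$ of multiplicity four (i.e. $F(R)=\tfrac14(R-a)^4$, which forces $a=1-\lambda$) is the union of the three curves $$\mathrm{Cusp}_1=\{(\lambda,\,-(\lambda-\sqrt{2\lambda-1}),\,1-\lambda-\sqrt{2\lambda-1}):\ \tfrac12<\lambda<1\},$$ $$\mathrm{Cusp}_2=\{(\lambda,\,\lambda-\sqrt{2\lambda-1},\,1-\lambda-\sqrt{2\lambda-1}):\ \tfrac12<\lambda<1\},$$ $$\mathrm{Cusp}_3=\{(\tfrac12,\,\mu,\,\tfrac14+\mu^2):\ -\tfrac12<\mu<\tfrac12\}.$$ On $\mathrm{Cusp}_3$ one has $a=\tfrac12$ and $h=\tfrac18+\mu^2$. The endpoints of these curves are the degenerate Hamiltonian Hopf points: $\mathrm{Cusp}_2$ and $\mathrm{Cusp}_3$ end at $(\tfrac12,\tfrac12,\tfrac12)$, $\mathrm{Cusp}_1$ and $\mathrm{Cusp}_3$ end at $(\tfrac12,-\tfrac12,\tfrac12)$, and $\mathrm{Cusp}_1$ and $\mathrm{Cusp}_2$ end at $(1,0,-1)$.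
   Context: These parameter values are the cusp bifurcations of the reduced one-degree-of-freedom system with Hamiltonian $\mathcal{H}_\lambda=X+\lambda R+\tfrac12R^2$ on the reduced phase space $\mathcal{P}_{\mu\ell}=\{(R,X,Y): R\ge\max(|\mu|,\ell),\ X^2+Y^2=(R^2-\mu^2)(R-\ell)\}$. *)

theory Defs
  imports "HOL-Analysis.Analysis" "HOL-Computational_Algebra.Polynomial"
begin

definition Fpoly :: "real \<Rightarrow> real \<Rightarrow> real \<Rightarrow> real \<Rightarrow> real poly" where
  "Fpoly lam mu l h = [:h, -lam, -1/2:]^2 - [:-(mu^2), 0, 1:] * [:-l, 1:]"

definition cusp_set :: "(real \<times> real \<times> real) set" where
  "cusp_set = {(lam, mu, l). \<exists>h a. a > max \<bar>mu\<bar> l \<and> order a (Fpoly lam mu l h) = 4}"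

definition Cusp1 :: "(real \<times> real \<times> real) set" where
  "Cusp1 = {(lam, -(lam - sqrt (2*lam - 1)), 1 - lam - sqrt (2*lam - 1)) | lam. 1/2 < lam \<and> lam < 1}"

definition Cusp2 :: "(real \<times> real \<times> real) set" where
  "Cusp2 = {(lam, lam - sqrt (2*lam - 1), 1 - lam - sqrt (2*lam - 1)) | lam. 1/2 < lam \<and> lam < 1}"

definition Cusp3 :: "(real \<times> real \<times> real) set" where
  "Cusp3 = {(1/2, mu, 1/4 + mu^2) | mu. -1/2 < mu \<and> mu < 1/2}"

end

theory Submission
  imports Defs
begin

lemma Fpoly_expl: "Fpoly lam mu l h = [:h^2 - mu^2*l, mu^2 - 2*lam*h, lam^2 - h + l, lam - 1, 1/4:]"
  unfolding Fpoly_def by (simp add: power2_eq_square algebra_simps)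

lemma q4_expl: "smult (1/4) ([:-a,1:]^4) = [:a^4/4, -(a^3), 3/2*a^2, -a, 1/4::real:]"
  by (simp add: eval_nat_numeral algebra_simps)

lemma order4_iff: "order a (Fpoly lam mu l h) = 4 \<longleftrightarrow> Fpoly lam mu l h = smult (1/4) ([:-a,1:]^4)"
proof
  assume o: "order a (Fpoly lam mu l h) = 4"
  let ?p = "Fpoly lam mu l h"
  have nz: "?p \<noteq> 0" unfolding Fpoly_expl by simp
  have dg: "degree ?p = 4" unfolding Fpoly_expl by simp
  have "[:-a,1:]^4 dvd ?p" using o by (simp add: order_divides)
  then obtain r where r: "?p = [:-a,1:]^4 * r" by (auto elim: dvdE)
  have rnz: "r \<noteq> 0" using nz r by auto
  have "degree ?p = degree ([:-a,1::real:]^4) + degree r" using r rnz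
    by (simp add: degree_mult_eq)
  then have "degree r = 0" using dg by (simp add: degree_power_eq)
  then obtain c where c: "r = [:c:]" using degree_eq_zeroE by blast
  have "?p = smult c ([:-a,1:]^4)" using r c by simp
  moreover have "coeff ?p 4 = 1/4" unfolding Fpoly_expl by (simp add: eval_nat_numeral)
  moreover have "coeff ([:-a,1::real:]^4) 4 = 1"
    by (simp add: eval_nat_numeral algebra_simps)
  ultimately have "c = 1/4" by simp
  with \<open>?p = smult c ([:-a,1:]^4)\<close> show "?p = smult (1/4) ([:-a,1:]^4)" by simp
next
  assume "Fpoly lam mu l h = smult (1/4) ([:-a,1:]^4)"
  then show "order a (Fpoly lam mu l h) = 4"
    by (simp add: order_smult order_power_n_n)
qed

lemma order4_eqs: "order a (Fpoly lam mu l h) = 4 \<longleftrightarrow>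
   (h^2 - mu^2*l = a^4/4 \<and> mu^2 - 2*lam*h = -(a^3) \<and> lam^2 - h + l = 3/2*a^2 \<and> a = 1 - lam)"
  apply (subst order4_iff) unfolding q4_expl Fpoly_expl by auto

lemma mem_cusp_iff: "(lam,mu,l) \<in> cusp_set \<longleftrightarrow>
   (1 - lam > max \<bar>mu\<bar> l \<and>
    mu^2 - 2*lam*(lam^2 + l - 3/2*(1-lam)^2) = -((1-lam)^3) \<and>
    (lam^2 + l - 3/2*(1-lam)^2)^2 - mu^2*l = (1-lam)^4/4)"
proof
  assume "(lam,mu,l) \<in> cusp_set"
  then obtain h a where "a > max \<bar>mu\<bar> l" "order a (Fpoly lam mu l h) = 4"
    unfolding cusp_set_def by blast
  then have "a > max \<bar>mu\<bar> l" "h^2 - mu^2*l = a^4/4" "mu^2 - 2*lam*h = -(a^3)"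
     "lam^2 - h + l = 3/2*a^2" "a = 1 - lam" unfolding order4_eqs by blast+
  moreover have "h = lam^2 + l - 3/2*(1-lam)^2" using calculation by simp
  ultimately show "1 - lam > max \<bar>mu\<bar> l \<and>
    mu^2 - 2*lam*(lam^2 + l - 3/2*(1-lam)^2) = -((1-lam)^3) \<and>
    (lam^2 + l - 3/2*(1-lam)^2)^2 - mu^2*l = (1-lam)^4/4"
    by (simp only:)
next
  assume H: "1 - lam > max \<bar>mu\<bar> l \<and>
    mu^2 - 2*lam*(lam^2 + l - 3/2*(1-lam)^2) = -((1-lam)^3) \<and>
    (lam^2 + l - 3/2*(1-lam)^2)^2 - mu^2*l = (1-lam)^4/4"
  have "order (1-lam) (Fpoly lam mu l (lam^2 + l - 3/2*(1-lam)^2)) = 4"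
    unfolding order4_eqs using H by simp
  then show "(lam,mu,l) \<in> cusp_set" using H unfolding cusp_set_def by blast
qed

lemma alg1:
  fixes r lam l h a :: real
  assumes "lam = (1+r^2)/2" "a = 1 - lam" "l = a - r" "h = lam^2 + l - 3/2*a^2"
  shows "2*lam*h - a^3 = (lam - r)^2" "h^2 - (lam-r)^2*l = a^4/4"
  using assms by algebra+

lemma alg2:
  fixes lam l h a mu :: real
  assumes "a = 1 - lam" "h = lam^2 + l - 3/2*a^2" "mu^2 = 2*lam*h - a^3" "h^2 - mu^2*l = a^4/4"
  shows "(1 - 2*lam) * ((l-a)^2 - (2*lam - 1)) = 0"
proof -
  have "(1 - 2*lam) * ((l-a)^2 - (2*lam - 1)) = h^2 - (2*lam*h - a^3)*l - a^4/4"
    using assms(1,2) by algebra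
  also have "\<dots> = 0" using assms(3,4) by simp
  finally show ?thesis .
qed


lemma cusp_fwd:
  assumes "(lam,mu,l) \<in> cusp_set"
  shows "(lam,mu,l) \<in> Cusp1 \<union> Cusp2 \<union> Cusp3"
proof -
  define a where "a = 1 - lam"
  define h where "h = lam^2 + l - 3/2*a^2"
  have A: "a > \<bar>mu\<bar>" "a > l" "mu^2 = 2*lam*h - a^3" "h^2 - mu^2*l = a^4/4"
    using assms unfolding mem_cusp_iff a_def h_def by auto
  have E: "(1 - 2*lam) * ((l-a)^2 - (2*lam - 1)) = 0"
    using alg2[OF a_def h_def A(3,4)] .
  show ?thesis
  proof (cases "lam = 1/2")
    case True
    then have "a = 1/2" using a_def by simp
    then have "mu^2 = l - 1/4" using A(3) unfolding h_def \<open>a = 1/2\<close> True by (simp add: power2_eq_square power3_eq_cube)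
    then have "l = 1/4 + mu^2" by simp
    moreover have "-1/2 < mu \<and> mu < 1/2" using A(1) \<open>a = 1/2\<close> by auto
    ultimately have "(lam,mu,l) \<in> Cusp3" unfolding Cusp3_def using True by auto
    then show ?thesis by blast
  next
    case False
    then have "(l-a)^2 = 2*lam - 1" using E by simp
    define r where "r = a - l"
    have r0: "r > 0" using A(2) r_def by simp
    have r2: "r^2 = 2*lam - 1" using \<open>(l-a)^2 = 2*lam - 1\<close> r_def by (simp add: power2_commute)
    have sq: "sqrt (2*lam - 1) = r" using r2 r0 by (metis less_imp_le real_sqrt_abs abs_of_nonneg)
    have lamr: "lam = (1+r^2)/2" using r2 by simp
    have lr: "l = a - r" using r_def by simp
    have "2*lam*h - a^3 = (lam - r)^2" using alg1(1)[OF lamr a_def lr] h_def by simp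
    then have "mu^2 = (lam - r)^2" using A(3) by simp
    then have mus: "mu = lam - r \<or> mu = -(lam - r)" by (simp add: power2_eq_iff)
    have l1: "1/2 < lam" using lamr r0 by (simp add: zero_less_power)
    have l2: "lam < 1" using A(1) a_def by linarith
    have ll: "l = 1 - lam - sqrt (2*lam - 1)" using sq lr a_def by simp
    from mus show ?thesis
    proof
      assume "mu = lam - r"
      then have "(lam,mu,l) \<in> Cusp2" unfolding Cusp2_def using l1 l2 ll sq by auto
      then show ?thesis by blast
    next
      assume "mu = -(lam - r)"
      then have "(lam,mu,l) \<in> Cusp1" unfolding Cusp1_def using l1 l2 ll sq by auto
      then show ?thesis by blast
    qed
  qed
qed

lemma cusp12_bwd:
  assumes "1/2 < lam" "lam < 1" "mu = lam - sqrt (2*lam - 1) \<or> mu = -(lam - sqrt (2*lam - 1))"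
    "l = 1 - lam - sqrt (2*lam - 1)"
  shows "(lam,mu,l) \<in> cusp_set"
proof -
  define r where "r = sqrt (2*lam - 1)"
  have r2: "r^2 = 2*lam - 1" using assms(1) r_def by simp
  have r0: "r > 0" using assms(1) r_def by simp
  have r1: "r < 1" using assms(2) r_def by simp
  define a where "a = 1 - lam"
  define h where "h = lam^2 + l - 3/2*a^2"
  have lamr: "lam = (1+r^2)/2" using r2 by simp
  have lr: "l = a - r" using assms(4) r_def a_def by simp
  have mu2: "mu^2 = (lam - r)^2" using assms(3) r_def by (auto simp: power2_commute)
  have e1: "2*lam*h - a^3 = (lam - r)^2" "h^2 - (lam-r)^2*l = a^4/4"
    using alg1[OF lamr a_def lr h_def] by auto
  have pp: "lam - r = (1-r)^2/2" using lamr by (simp add: power2_eq_square field_simps)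
  have p: "lam - r \<ge> 0" unfolding pp by simp
  have qq: "a - (lam - r) = r*(1-r)" using lamr a_def by (simp add: power2_eq_square field_simps)
  have "r*(1-r) > 0" using r0 r1 by simp
  then have q: "a > lam - r" using qq by linarith
  have ab: "\<bar>mu\<bar> = lam - r" using assms(3) r_def p by auto
  show ?thesis unfolding mem_cusp_iff
    using e1 mu2 ab q lr r0 unfolding a_def h_def by auto
qed

lemma cusp3_bwd:
  assumes "-1/2 < mu" "mu < 1/2"
  shows "(1/2,mu,1/4 + mu^2) \<in> cusp_set"
proof -
  have m: "\<bar>mu\<bar> < 1/2" using assms by auto
  have "\<bar>mu\<bar>^2 < (1/2)^2" by (rule power_strict_mono) (use m in auto)
  then have "mu^2 < 1/4" by (simp add: power2_eq_square)
  moreover note m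
  ultimately show ?thesis unfolding mem_cusp_iff by (simp add: algebra_simps power2_eq_square power3_eq_cube power4_eq_xxxx max_def)
qed

lemma cusp_eq: "cusp_set = Cusp1 \<union> Cusp2 \<union> Cusp3"
proof
  show "cusp_set \<subseteq> Cusp1 \<union> Cusp2 \<union> Cusp3" using cusp_fwd by auto
next
  show "Cusp1 \<union> Cusp2 \<union> Cusp3 \<subseteq> cusp_set"
    unfolding Cusp1_def Cusp2_def Cusp3_def using cusp12_bwd cusp3_bwd by auto
qed


lemma closure_curve:
  fixes g :: "real \<Rightarrow> real \<times> real \<times> real"
  assumes ab: "a < b" and c: "continuous_on {a..b} g" and i: "inj_on g {a..b}"
  shows "closure (g ` {a<..<b}) - g ` {a<..<b} = {g a, g b}"
proof -
  have cl: "closed (g ` {a..b})"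
    by (rule compact_imp_closed[OF compact_continuous_image[OF c compact_Icc]])
  have "closure (g ` {a<..<b}) \<subseteq> g ` {a..b}"
    by (rule closure_minimal[OF _ cl]) auto
  moreover have "g ` closure {a<..<b} \<subseteq> closure (g ` {a<..<b})"
    by (rule image_closure_subset) (use c ab in simp, simp, rule closure_subset)
  ultimately have e: "closure (g ` {a<..<b}) = g ` {a..b}" using ab by auto
  have "g ` {a..b} - g ` {a<..<b} = g ` ({a..b} - {a<..<b})"
    by (rule inj_on_image_set_diff[symmetric, OF i]) auto
  also have "{a..b} - {a<..<b} = {a, b}" using ab by auto
  finally show ?thesis using e by simp
qed

lemma Cusp1_img: "Cusp1 = (\<lambda>t. (t, -(t - sqrt (2*t-1)), 1 - t - sqrt (2*t-1))) ` {1/2<..<1}"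
  unfolding Cusp1_def by auto
lemma Cusp2_img: "Cusp2 = (\<lambda>t. (t, t - sqrt (2*t-1), 1 - t - sqrt (2*t-1))) ` {1/2<..<1}"
  unfolding Cusp2_def by auto
lemma Cusp3_img: "Cusp3 = (\<lambda>m. (1/2::real, m, 1/4 + m^2)) ` {-1/2<..<1/2}"
  unfolding Cusp3_def by auto

lemma cl1: "closure Cusp1 - Cusp1 = {(1/2, -1/2, 1/2), (1, 0, -1)}"
  unfolding Cusp1_img
  by (subst closure_curve) (auto intro!: continuous_intros simp: inj_on_def)
lemma cl2: "closure Cusp2 - Cusp2 = {(1/2, 1/2, 1/2), (1, 0, -1)}"
  unfolding Cusp2_img
  by (subst closure_curve) (auto intro!: continuous_intros simp: inj_on_def)
lemma cl3: "closure Cusp3 - Cusp3 = {(1/2, 1/2, 1/2), (1/2, -1/2, 1/2)}"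
  unfolding Cusp3_img
  by (subst closure_curve) (auto intro!: continuous_intros simp: inj_on_def power2_eq_square)

theorem mainTheorem7:
  shows "cusp_set = Cusp1 \<union> Cusp2 \<union> Cusp3
    \<and> (\<forall>lam mu l h a. (lam, mu, l) \<in> Cusp3 \<longrightarrow> a > max \<bar>mu\<bar> l \<longrightarrow>
           order a (Fpoly lam mu l h) = 4 \<longrightarrow> a = 1/2 \<and> h = 1/8 + mu^2)
    \<and> closure Cusp1 - Cusp1 = {(1/2, -1/2, 1/2), (1, 0, -1)}
    \<and> closure Cusp2 - Cusp2 = {(1/2, 1/2, 1/2), (1, 0, -1)}
    \<and> closure Cusp3 - Cusp3 = {(1/2, 1/2, 1/2), (1/2, -1/2, 1/2)}"
proof (intro conjI allI impI)
  fix lam mu l h a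
  assume c3: "(lam, mu, l) \<in> Cusp3" and "a > max \<bar>mu\<bar> l" and o: "order a (Fpoly lam mu l h) = 4"
  from c3 have L: "lam = 1/2" "l = 1/4 + mu^2" unfolding Cusp3_def by auto
  from o have E: "lam^2 - h + l = 3/2*a^2" "a = 1 - lam" unfolding order4_eqs by auto
  show "a = 1/2" using E L by simp
  show "h = 1/8 + mu^2" using E L by (simp add: power2_eq_square)
qed (rule cusp_eq cl1 cl2 cl3)+

end
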